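(* Let $p\in(\frac12,1)$ and let $W_p^*$ and $W_{1/2}^*$ both start in $0$. For $N\ge2$ and a path $w$ of either chain, set $$M_N(w):=\max_{1\le k\le N}\ \max_{\tau_k(w)\le n<\tau_{k+1}(w)}\big(\log_N k-\log_N w(n)\big).$$ Then $M_N(W_p^* )$ is stochastically not larger than $M_N(W_{1/2}^* )$, i.e. $\mathbb P(M_N(W_p^* )>x)\le\mathbb P(M_N(W_{1/2}^* )>x)$ for all $x\in\mathbb R$.
   Context: For $p\in(\frac12,1)$ and $r:=\frac{1-p}{p}$, $W_p^*$ is the Markov chain on $\mathbb N_0$ with $\mathbb P(W_p^*(1)=1\mid W_p^*(0)=0)=1$ and, for $k\in\mathbb N$, up-probability $\frac{1-r^{k+1}}{(1+r)(1-r^k)}$ from $k$ to $k+1$ and the complementary probability from $k$ to $k-1$. $W_{1/2}^*$ is the Markov chain on $\mathbb N_0$ with $\mathbb P(W^*_{1/2}(1)=1\mid W^*_{1/2}(0)=0)=1$ and $\mathbb P(W^*_{1/2}(1)=k\pm1\mid W^*_{1/2}(0)=k)=\frac12\cdot\frac{k\pm1}{k}$ for $k\in\mathbb N$. For a path $w$, $\tau_k(w):=\min\{n\in\mathbb N_0: w(n)=k\}$. $\log_N x=\log x/\log N$. *)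

theory Defs
  imports "HOL-Probability.Probability"
begin

definition up_p :: "real \<Rightarrow> nat \<Rightarrow> real" where
  "up_p p k = (let r = (1 - p) / p in (1 - r ^ (k + 1)) / ((1 + r) * (1 - r ^ k)))"

definition up_half :: "nat \<Rightarrow> real" where
  "up_half k = (real k + 1) / (2 * real k)"

text \<open>One step of a nearest-neighbour chain on the naturals driven by a uniform
  variable u on [0,1]: from 0 go to 1 surely; from k \<ge> 1 go up iff u < up k
  (which happens with probability up k), otherwise down.\<close>

definition step :: "(nat \<Rightarrow> real) \<Rightarrow> nat \<Rightarrow> real \<Rightarrow> nat" where
  "step up k u = (if k = 0 then 1 else if u < up k then k + 1 else k - 1)"

primrec chain_path :: "(nat \<Rightarrow> real) \<Rightarrow> real stream \<Rightarrow> nat \<Rightarrow> nat" where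
  "chain_path up us 0 = 0"
| "chain_path up us (Suc n) = step up (chain_path up us n) (us !! n)"

definition noise :: "real stream measure" where
  "noise = stream_space (uniform_measure lborel {0..1})"

definition tau :: "nat \<Rightarrow> (nat \<Rightarrow> nat) \<Rightarrow> enat" where
  "tau k w = (if \<exists>n. w n = k then enat (LEAST n. w n = k) else \<infinity>)"

definition M_N :: "nat \<Rightarrow> (nat \<Rightarrow> nat) \<Rightarrow> real" where
  "M_N N w = Sup {log N (real k) - log N (real (w n)) | k n.
                   1 \<le> k \<and> k \<le> N \<and> tau k w \<le> enat n \<and> enat n < tau (k + 1) w}"

end

theory Submission
  imports Defs
begin

abbreviation UU :: "real measure" where "UU \<equiv> uniform_measure lborel {0..1::real}"

lemma probU: "prob_space UU"
  by (intro prob_space_uniform_measure) auto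

interpretation U: prob_space UU by (rule probU)

interpretation S: prob_space "stream_space UU" by (rule U.prob_space_stream_space)

primrec traj :: "('s \<Rightarrow> real \<Rightarrow> 's) \<Rightarrow> 's \<Rightarrow> real stream \<Rightarrow> nat \<Rightarrow> 's" where
  "traj nx s us 0 = s"
| "traj nx s us (Suc n) = traj nx (nx s (shd us)) (stl us) n"

lemma traj_Cons: "traj nx s (u ## us) (Suc n) = traj nx (nx s u) us n"
  by simp

lemma traj_meas:
  fixes nx :: "'s::countable \<Rightarrow> real \<Rightarrow> 's"
  assumes meas: "\<And>s. nx s \<in> measurable UU (count_space UNIV)"
  shows "(\<lambda>us. traj nx s us n) \<in> measurable (stream_space UU) (count_space UNIV)"
proof (induction n arbitrary: s)
  case 0
  then show ?case by simp
next
  case (Suc n)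
  have g: "(\<lambda>us. nx s (shd us)) \<in> measurable (stream_space UU) (count_space UNIV)"
    using meas[of s] measurable_shd by (rule measurable_compose[rotated])
  have "(\<lambda>us. traj nx (nx s (shd us)) (stl us) n) \<in> measurable (stream_space UU) (count_space UNIV)"
    apply (rule measurable_compose_countable'[where f="\<lambda>i us. traj nx i (stl us) n" and I=UNIV, OF _ g])
    using Suc measurable_stl by (auto intro: measurable_compose)
  then show ?case by simp
qed

lemma pred_traj:
  fixes nx :: "'s::countable \<Rightarrow> real \<Rightarrow> 's"
  assumes meas: "\<And>s. nx s \<in> measurable UU (count_space UNIV)"
  shows "Measurable.pred (stream_space UU) (\<lambda>us. A (traj nx s us n))"
  using traj_meas[OF meas, where s=s and n=n] by (rule measurable_compose) simp

lemma ex_le_Suc: "(\<exists>m\<le>Suc n. P m) \<longleftrightarrow> P 0 \<or> (\<exists>m\<le>n. P (Suc m))"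
  by (metis Suc_le_mono le0 not0_implies_Suc)

lemma all_le_Suc: "(\<forall>m\<le>Suc n. P m) \<longleftrightarrow> P 0 \<and> (\<forall>m\<le>n. P (Suc m))"
  by (metis Suc_le_mono le0 not0_implies_Suc)

lemma reach_bound:
  fixes nx :: "'s::countable \<Rightarrow> real \<Rightarrow> 's" and g :: "'s \<Rightarrow> ennreal"
  assumes meas: "\<And>s. nx s \<in> measurable UU (count_space UNIV)"
  and inv: "\<And>s u. Inv s \<Longrightarrow> Inv (nx s u)"
  and hA: "\<And>s. Inv s \<Longrightarrow> A s \<Longrightarrow> 1 \<le> g s"
  and hS: "\<And>s. Inv s \<Longrightarrow> \<not> A s \<Longrightarrow> (\<integral>\<^sup>+u. g (nx s u) \<partial>UU) \<le> g s"
  and s: "Inv s"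
  shows "emeasure (stream_space UU) {us \<in> space (stream_space UU). \<exists>n. A (traj nx s us n)} \<le> g s"
proof -
  note [measurable] = pred_traj[OF meas]
  define E where "E n s = {us \<in> space (stream_space UU). \<exists>m\<le>n. A (traj nx s us m)}" for n s
  have Emeas[measurable]: "E n s \<in> sets (stream_space UU)" for n s
    unfolding E_def by measurable
  have fin: "Inv s \<longrightarrow> emeasure (stream_space UU) (E n s) \<le> g s" for n s
  proof (induction n arbitrary: s)
    case 0
    show ?case
    proof (intro impI)
      assume "Inv s"
      show "emeasure (stream_space UU) (E 0 s) \<le> g s"
      proof (cases "A s")
        case True
        then show ?thesis using hA[OF \<open>Inv s\<close> True] S.emeasure_le_1 order_trans by blast
      next
        case False
        then have "E 0 s = {}" unfolding E_def by auto
        then show ?thesis by simp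
      qed
    qed
  next
    case (Suc n)
    show ?case
    proof (intro impI)
      assume Is: "Inv s"
      show "emeasure (stream_space UU) (E (Suc n) s) \<le> g s"
      proof (cases "A s")
        case True
        then show ?thesis using hA[OF Is True] S.emeasure_le_1 order_trans by blast
      next
        case False
        have "emeasure (stream_space UU) (E (Suc n) s) =
           (\<integral>\<^sup>+t. emeasure (stream_space UU) {x\<in>space (stream_space UU). t ## x \<in> E (Suc n) s} \<partial>UU)"
          by (rule U.emeasure_stream_space) simp
        also have "\<dots> = (\<integral>\<^sup>+t. emeasure (stream_space UU) (E n (nx s t)) \<partial>UU)"
        proof (rule nn_integral_cong)
          fix t assume t: "t \<in> space UU"
          have "{x\<in>space (stream_space UU). t ## x \<in> E (Suc n) s} = E n (nx s t)"
            using t False unfolding E_def by (auto simp: stream_space_Stream ex_le_Suc)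
          then show "emeasure (stream_space UU) {x\<in>space (stream_space UU). t ## x \<in> E (Suc n) s} =
              emeasure (stream_space UU) (E n (nx s t))" by simp
        qed
        also have "\<dots> \<le> (\<integral>\<^sup>+t. g (nx s t) \<partial>UU)"
          by (rule nn_integral_mono) (use Suc inv[OF Is] in blast)
        also have "\<dots> \<le> g s" by (rule hS[OF Is False])
        finally show ?thesis .
      qed
    qed
  qed
  have "{us \<in> space (stream_space UU). \<exists>n. A (traj nx s us n)} = (\<Union>n. E n s)"
    unfolding E_def by auto
  moreover have "emeasure (stream_space UU) (\<Union>n. E n s) = (SUP n. emeasure (stream_space UU) (E n s))"
    by (rule SUP_emeasure_incseq[symmetric]) (auto simp: incseq_def E_def intro: le_trans)
  moreover have "(SUP n. emeasure (stream_space UU) (E n s)) \<le> g s"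
    using fin s by (auto intro!: SUP_least)
  ultimately show ?thesis by simp
qed

lemma safe_bound:
  fixes nx :: "'s::countable \<Rightarrow> real \<Rightarrow> 's" and Q \<phi> :: "'s \<Rightarrow> real" and \<theta> :: real
  assumes meas: "\<And>s. nx s \<in> measurable UU (count_space UNIV)"
  and inv: "\<And>s u. Inv s \<Longrightarrow> Inv (nx s u)"
  and Qnn: "\<And>s. 0 \<le> Q s" and pnn: "\<And>s. 0 \<le> \<phi> s" and th: "0 \<le> \<theta>" "\<theta> < 1"
  and h0: "\<And>s. Inv s \<Longrightarrow> \<not> B s \<Longrightarrow> 1 \<le> Q s + \<phi> s"
  and h1: "\<And>s. Inv s \<Longrightarrow> \<not> B s \<Longrightarrow> Q s < 1 \<Longrightarrow>
      (\<integral>\<^sup>+u. ennreal (Q (nx s u)) \<partial>UU) \<le> ennreal (Q s) \<and>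
      (\<integral>\<^sup>+u. ennreal (\<phi> (nx s u)) \<partial>UU) \<le> ennreal (\<theta> * \<phi> s)"
  and s: "Inv s"
  shows "measure (stream_space UU) {us \<in> space (stream_space UU). \<forall>n. \<not> B (traj nx s us n)} \<le> Q s"
proof -
  note [measurable] = pred_traj[OF meas]
  have mQ: "(\<lambda>u. f (nx s u)) \<in> borel_measurable UU" for f :: "'s \<Rightarrow> ennreal" and s
    using meas[of s] by (rule measurable_compose) simp
  define E where "E n s = {us \<in> space (stream_space UU). \<forall>m\<le>n. \<not> B (traj nx s us m)}" for n s
  have Emeas[measurable]: "E n s \<in> sets (stream_space UU)" for n s
    unfolding E_def by measurable
  have fin: "Inv s \<longrightarrow> emeasure (stream_space UU) (E n s) \<le> ennreal (Q s + \<phi> s * \<theta> ^ n)" for n s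
  proof (induction n arbitrary: s)
    case 0
    show ?case
    proof (intro impI)
      assume "Inv s"
      show "emeasure (stream_space UU) (E 0 s) \<le> ennreal (Q s + \<phi> s * \<theta> ^ 0)"
      proof (cases "B s")
        case False
        have "1 \<le> ennreal (Q s + \<phi> s * \<theta> ^ 0)" using h0[OF \<open>Inv s\<close> False]
          by (simp add: ennreal_ge_1)
        then show ?thesis using S.emeasure_le_1 order_trans by blast
      next
        case True
        then have "E 0 s = {}" unfolding E_def by auto
        then show ?thesis by simp
      qed
    qed
  next
    case (Suc n)
    show ?case
    proof (intro impI)
      assume Is: "Inv s"
      show "emeasure (stream_space UU) (E (Suc n) s) \<le> ennreal (Q s + \<phi> s * \<theta> ^ Suc n)"
      proof (cases "B s")
        case True
        then have "E (Suc n) s = {}" unfolding E_def by auto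
        then show ?thesis by simp
      next
        case False
        show ?thesis
        proof (cases "Q s < 1")
          case False
          have "0 \<le> \<phi> s * \<theta> ^ Suc n" using pnn th by simp
          then have "1 \<le> ennreal (Q s + \<phi> s * \<theta> ^ Suc n)" using False by (simp only: ennreal_ge_1)
          then show ?thesis using S.emeasure_le_1 order_trans by blast
        next
          case Qs: True
          note hh = h1[OF Is \<open>\<not> B s\<close> Qs]
          have "emeasure (stream_space UU) (E (Suc n) s) =
             (\<integral>\<^sup>+t. emeasure (stream_space UU) {x\<in>space (stream_space UU). t ## x \<in> E (Suc n) s} \<partial>UU)"
            by (rule U.emeasure_stream_space) simp
          also have "\<dots> = (\<integral>\<^sup>+t. emeasure (stream_space UU) (E n (nx s t)) \<partial>UU)"
          proof (rule nn_integral_cong)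
            fix t assume t: "t \<in> space UU"
            have "{x\<in>space (stream_space UU). t ## x \<in> E (Suc n) s} = E n (nx s t)"
              using t \<open>\<not> B s\<close> unfolding E_def by (auto simp: stream_space_Stream all_le_Suc)
            then show "emeasure (stream_space UU) {x\<in>space (stream_space UU). t ## x \<in> E (Suc n) s} =
                emeasure (stream_space UU) (E n (nx s t))" by simp
          qed
          also have "\<dots> \<le> (\<integral>\<^sup>+t. ennreal (Q (nx s t) + \<phi> (nx s t) * \<theta> ^ n) \<partial>UU)"
            by (rule nn_integral_mono) (use Suc inv[OF Is] in blast)
          also have "\<dots> = (\<integral>\<^sup>+t. ennreal (Q (nx s t)) \<partial>UU) + (\<integral>\<^sup>+t. ennreal (\<phi> (nx s t)) * ennreal (\<theta> ^ n) \<partial>UU)"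
          proof -
            have "\<And>t. ennreal (Q (nx s t) + \<phi> (nx s t) * \<theta> ^ n) = ennreal (Q (nx s t)) + ennreal (\<phi> (nx s t)) * ennreal (\<theta> ^ n)"
              using Qnn pnn th by (simp add: ennreal_plus ennreal_mult)
            then have "(\<integral>\<^sup>+t. ennreal (Q (nx s t) + \<phi> (nx s t) * \<theta> ^ n) \<partial>UU) = (\<integral>\<^sup>+t. ennreal (Q (nx s t)) + ennreal (\<phi> (nx s t)) * ennreal (\<theta> ^ n) \<partial>UU)"
              by simp
            also have "\<dots> = (\<integral>\<^sup>+t. ennreal (Q (nx s t)) \<partial>UU) + (\<integral>\<^sup>+t. ennreal (\<phi> (nx s t)) * ennreal (\<theta> ^ n) \<partial>UU)"
              by (rule nn_integral_add) (auto intro!: mQ borel_measurable_times measurable_const)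
            finally show ?thesis .
          qed
          also have "\<dots> = (\<integral>\<^sup>+t. ennreal (Q (nx s t)) \<partial>UU) + (\<integral>\<^sup>+t. ennreal (\<phi> (nx s t)) \<partial>UU) * ennreal (\<theta> ^ n)"
            by (subst nn_integral_multc) (auto intro!: mQ)
          also have "\<dots> \<le> ennreal (Q s) + ennreal (\<theta> * \<phi> s) * ennreal (\<theta> ^ n)"
            using hh by (intro add_mono mult_right_mono) auto
          also have "\<dots> = ennreal (Q s + \<phi> s * \<theta> ^ Suc n)"
          proof -
            have "ennreal (\<theta> * \<phi> s) * ennreal (\<theta> ^ n) = ennreal (\<phi> s * \<theta> ^ Suc n)"
              using pnn th by (subst ennreal_mult[symmetric]) (auto simp: algebra_simps)
            moreover have "0 \<le> \<phi> s * \<theta> ^ Suc n" using pnn th by simp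
            ultimately show ?thesis using Qnn[of s] by (simp del: ennreal_plus add: ennreal_plus[symmetric])
          qed
          finally show ?thesis .
        qed
      qed
    qed
  qed
  define F where "F = {us \<in> space (stream_space UU). \<forall>n. \<not> B (traj nx s us n)}"
  have Fm[measurable]: "F \<in> sets (stream_space UU)" unfolding F_def by measurable
  have le: "measure (stream_space UU) F \<le> Q s + \<phi> s * \<theta> ^ n" for n
  proof -
    have "F \<subseteq> E n s" unfolding F_def E_def by auto
    then have "emeasure (stream_space UU) F \<le> ennreal (Q s + \<phi> s * \<theta> ^ n)"
    proof -
      have "emeasure (stream_space UU) F \<le> emeasure (stream_space UU) (E n s)"
        using \<open>F \<subseteq> E n s\<close> by (rule emeasure_mono) simp
      then show ?thesis using fin[of s n] s by (meson order_trans)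
    qed
    moreover have "0 \<le> Q s + \<phi> s * \<theta> ^ n" using Qnn pnn th by simp
    ultimately show ?thesis by (simp add: S.emeasure_eq_measure)
  qed
  have lim: "(\<lambda>n. Q s + \<phi> s * \<theta> ^ n) \<longlonglongrightarrow> Q s + \<phi> s * 0"
    using th by (intro tendsto_intros LIMSEQ_power_zero) auto
  show ?thesis
    unfolding F_def[symmetric]
  proof -
    have "measure (stream_space UU) F \<le> Q s + \<phi> s * 0"
      by (rule LIMSEQ_le_const[OF lim]) (use le in auto)
    then show "measure (stream_space UU) F \<le> Q s" by simp
  qed
qed

lemma int_step:
  fixes a :: real and f :: "'a \<Rightarrow> ennreal"
  assumes "0 \<le> a" "a \<le> 1"
  shows "(\<integral>\<^sup>+u. f (if u < a then X else Y) \<partial>UU) = ennreal a * f X + ennreal (1 - a) * f Y"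
proof -
  have "(\<integral>\<^sup>+u. f (if u < a then X else Y) \<partial>UU) =
     (\<integral>\<^sup>+u. f X * indicator {..<a} u + f Y * indicator {a..} u \<partial>UU)"
    by (intro nn_integral_cong) (auto split: split_indicator)
  also have "\<dots> = f X * emeasure UU {..<a} + f Y * emeasure UU {a..}"
    by (subst nn_integral_add) (auto simp: nn_integral_cmult_indicator)
  also have "emeasure UU {..<a} = ennreal a"
  proof -
    have "{0..1} \<inter> {..<a} = {0..<a::real}" using assms by auto
    then show ?thesis using assms by (simp add: divide_ennreal_def)
  qed
  also have "emeasure UU {a..} = ennreal (1 - a)"
  proof -
    have "{0..1} \<inter> {a..} = {a..1::real}" using assms by auto
    then show ?thesis using assms by (simp add: divide_ennreal_def)
  qed
  finally show ?thesis by (simp only: mult.commute[of "f X"] mult.commute[of "f Y"])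
qed

definition nxtS :: "(nat \<Rightarrow> real) \<Rightarrow> nat \<times> nat \<Rightarrow> real \<Rightarrow> nat \<times> nat" where
  "nxtS up s u = (step up (fst s) u, max (snd s) (step up (fst s) u))"

lemma nxt_meas: "nxtS up s \<in> measurable UU (count_space UNIV)"
proof -
  have "(\<lambda>u. step up (fst s) u) \<in> measurable UU (count_space UNIV)"
    unfolding step_def
    by (auto intro!: measurable_If measurable_const simp: pred_def)
  then show ?thesis unfolding nxtS_def by measurable
qed

lemma traj_Suc': "traj nx s us (Suc n) = nx (traj nx s us n) (us !! n)"
  by (induction n arbitrary: s us) auto

definition Smax :: "(nat \<Rightarrow> nat) \<Rightarrow> nat \<Rightarrow> nat" where
  "Smax w n = Max (w ` {..n})"

lemma Smax_Suc: "Smax w (Suc n) = max (Smax w n) (w (Suc n))"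
  unfolding Smax_def by (simp add: atMost_Suc max.commute)

lemma traj_chain: "traj (nxtS up) (0,0) us n = (chain_path up us n, Smax (chain_path up us) n)"
proof (induction n)
  case 0
  then show ?case by (simp add: Smax_def)
next
  case (Suc n)
  then show ?case by (simp del: traj.simps add: traj_Suc' nxtS_def Smax_Suc)
qed

lemma chain_nn: "chain_path up us (Suc n) = chain_path up us n + 1 \<or> chain_path up us (Suc n) + 1 = chain_path up us n"
  by (auto simp: step_def)

lemma ivt:
  fixes w :: "nat \<Rightarrow> nat"
  assumes w0: "w 0 = 0" and nn: "\<And>n. w (Suc n) = w n + 1 \<or> w (Suc n) + 1 = w n"
  shows "k \<le> w m \<Longrightarrow> \<exists>m'\<le>m. w m' = k"
proof (induction m)
  case 0
  then show ?case using w0 by auto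
next
  case (Suc m)
  show ?case
  proof (cases "w (Suc m) = k")
    case True then show ?thesis by blast
  next
    case False
    then have "k \<le> w m" using Suc.prems nn[of m] by auto
    then show ?thesis using Suc.IH le_Suc_eq by blast
  qed
qed

lemma tau_le:
  fixes w :: "nat \<Rightarrow> nat"
  assumes w0: "w 0 = 0" and nn: "\<And>n. w (Suc n) = w n + 1 \<or> w (Suc n) + 1 = w n"
  shows "tau k w \<le> enat n \<longleftrightarrow> k \<le> Smax w n"
proof
  assume "tau k w \<le> enat n"
  then have ex: "\<exists>n. w n = k" and le: "(LEAST n. w n = k) \<le> n"
    unfolding tau_def by (auto split: if_splits)
  have "w (LEAST n. w n = k) = k" using ex by (rule LeastI_ex)
  moreover have "w (LEAST n. w n = k) \<in> w ` {..n}" using le by auto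
  ultimately show "k \<le> Smax w n" unfolding Smax_def
    by (metis Max_ge finite_atMost finite_imageI)
next
  assume kS: "k \<le> Smax w n"
  have MI: "Max (w ` {..n}) \<in> w ` {..n}" by (rule Max_in) auto
  obtain m0 where m0': "m0 \<in> {..n}" "Max (w ` {..n}) = w m0" using MI by blast
  then have m0: "m0 \<le> n" "Max (w ` {..n}) = w m0" by auto
  have m: "m0 \<le> n" "k \<le> w m0"
    using kS m0 unfolding Smax_def by auto
  then obtain m' where m': "m' \<le> m0" "w m' = k" using ivt[OF w0 nn] by blast
  have "(LEAST n. w n = k) \<le> m'" by (rule Least_le[where P="\<lambda>n. w n = k"]) (rule m'(2))
  then show "tau k w \<le> enat n" unfolding tau_def using m m' by auto
qed

fun Bad :: "nat \<Rightarrow> real \<Rightarrow> nat \<times> nat \<Rightarrow> bool" where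
  "Bad N x (w, S) = (1 \<le> S \<and> S \<le> N \<and> x < log N (real S) - log N (real w))"

lemma M_N_char:
  fixes w :: "nat \<Rightarrow> nat"
  assumes w0: "w 0 = 0" and nn: "\<And>n. w (Suc n) = w n + 1 \<or> w (Suc n) + 1 = w n"
  and N: "2 \<le> N"
  shows "x < M_N N w \<longleftrightarrow> (\<exists>n. Bad N x (w n, Smax w n))"
proof -
  define X where "X = {log N (real k) - log N (real (w n)) | k n.
                   1 \<le> k \<and> k \<le> N \<and> tau k w \<le> enat n \<and> enat n < tau (k + 1) w}"
  have X: "X = {log N (real (Smax w n)) - log N (real (w n)) | n. 1 \<le> Smax w n \<and> Smax w n \<le> N}"
  proof -
    have eq: "tau k w \<le> enat n \<and> enat n < tau (k + 1) w \<longleftrightarrow> k = Smax w n" for k n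
    proof -
      have "enat n < tau (k + 1) w \<longleftrightarrow> \<not> k + 1 \<le> Smax w n"
        unfolding not_le[symmetric] tau_le[OF w0 nn] ..
      then show ?thesis using tau_le[OF w0 nn, of k n] by auto
    qed
    show ?thesis unfolding X_def eq by auto
  qed
  have w1: "w 1 = 1" using nn[of 0] w0 by auto
  have S1: "Smax w 1 = 1" using w0 w1 by (simp add: Smax_def atMost_Suc)
  have "log N (real (Smax w 1)) - log N (real (w 1)) \<in> X" unfolding X mem_Collect_eq using S1 N by (intro exI[of _ 1]) auto
  then have ne: "X \<noteq> {}" by blast
  have bd: "bdd_above X"
  proof (rule bdd_aboveI)
    fix y assume "y \<in> X"
    then obtain n where n: "y = log N (real (Smax w n)) - log N (real (w n))" "1 \<le> Smax w n" "Smax w n \<le> N"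
      unfolding X by blast
    have "log N (real (Smax w n)) \<le> log N (real N)"
      using n N by (subst log_le_cancel_iff) auto
    also have "\<dots> = 1" using N by simp
    finally have a: "log N (real (Smax w n)) \<le> 1" .
    have b: "0 \<le> log N (real (w n))"
      using N by (cases "w n = 0") (auto simp: log_def)
    show "y \<le> 1" using a b n(1) by linarith
  qed
  have "x < M_N N w \<longleftrightarrow> (\<exists>y\<in>X. x < y)"
    unfolding M_N_def X_def[symmetric] using ne bd by (rule less_cSup_iff)
  also have "\<dots> \<longleftrightarrow> (\<exists>n. Bad N x (w n, Smax w n))"
    unfolding X by auto
  finally show ?thesis .
qed

lemma event_eq:
  assumes N: "2 \<le> N"
  shows "{us \<in> space noise. x < M_N N (chain_path up us)} =
         {us \<in> space (stream_space UU). \<exists>n. Bad N x (traj (nxtS up) (0,0) us n)}"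
proof -
  have "\<And>us. x < M_N N (chain_path up us) \<longleftrightarrow> (\<exists>n. Bad N x (chain_path up us n, Smax (chain_path up us) n))"
    by (rule M_N_char) (simp, rule chain_nn, rule N)
  then show ?thesis unfolding noise_def traj_chain by auto
qed

definition upr :: "real \<Rightarrow> nat \<Rightarrow> real" where
  "upr r k = (1 - r ^ (k + 1)) / ((1 + r) * (1 - r ^ k))"

lemma up_p_eq: "up_p p = upr ((1 - p) / p)"
  by (rule ext) (simp add: up_p_def upr_def Let_def)

definition Gp :: "real \<Rightarrow> nat \<Rightarrow> nat \<Rightarrow> nat \<Rightarrow> real" where
  "Gp r S b w = (r ^ b - r ^ w) / (r ^ b - r ^ (S + 1)) * ((1 - r ^ (S + 1)) / (1 - r ^ w))"

definition Gh :: "nat \<Rightarrow> nat \<Rightarrow> nat \<Rightarrow> real" where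
  "Gh S b w = (real w - real b) / (real S + 1 - real b) * ((real S + 1) / real w)"

lemma pow_lt1: "0 < r \<Longrightarrow> r < (1::real) \<Longrightarrow> 1 \<le> n \<Longrightarrow> r ^ n < 1"
  by (simp add: power_less_one_iff)

lemma upr1: "0 < r \<Longrightarrow> r < 1 \<Longrightarrow> upr r 1 = 1"
proof -
  assume r: "0 < r" "r < 1"
  have "r * r < 1 * 1" using r by (intro mult_strict_mono) auto
  then show ?thesis using r unfolding upr_def by (simp add: power2_eq_square field_simps)
qed

lemma uph1: "up_half 1 = 1"
  unfolding up_half_def by simp

lemma upr_bnd:
  assumes r: "0 < r" "r < 1" and k: "1 \<le> k"
  shows "0 \<le> upr r k \<and> upr r k \<le> 1"
proof -
  define t where "t = r ^ k"
  have t1: "t < 1" unfolding t_def using r k by (intro pow_lt1) auto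
  have tr: "t \<le> r" unfolding t_def using r k power_decreasing[of 1 k r] by simp
  have t0: "0 < t" unfolding t_def using r by simp
  have e: "r ^ (k + 1) = r * t" unfolding t_def by simp
  have num: "0 < 1 - r * t" using r t1 t0 by (smt (verit) mult_less_cancel_left2)
  have le: "1 - r * t \<le> (1 + r) * (1 - t)" using tr by (simp add: algebra_simps)
  have den: "0 < (1 + r) * (1 - t)" using r t1 by simp
  show ?thesis unfolding upr_def e t_def[symmetric] using num le den
    by (simp add: divide_le_eq_1)
qed

lemma uph_bnd: "1 \<le> k \<Longrightarrow> 0 \<le> up_half k \<and> up_half k \<le> 1"
proof -
  assume k: "1 \<le> k"
  then have "real k + 1 \<le> 2 * real k" by simp
  moreover have "0 < 2 * real k" using k by simp
  ultimately show ?thesis unfolding up_half_def by (simp add: divide_le_eq_1)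
qed

lemma Gp_top: "0 < r \<Longrightarrow> r < 1 \<Longrightarrow> b \<le> S \<Longrightarrow> Gp r S b (S + 1) = 1"
proof -
  assume r: "0 < r" "r < 1" and bS: "b \<le> S"
  have "r ^ (S+1) < r ^ b" using r bS by (intro power_strict_decreasing) auto
  moreover have "r ^ (S+1) < 1" using r by (intro pow_lt1) auto
  ultimately show ?thesis unfolding Gp_def by simp
qed

lemma Gp_zero: "Gp r S b b = 0"
  unfolding Gp_def by simp

lemma Gh_top: "b \<le> S \<Longrightarrow> Gh S b (S + 1) = 1"
  unfolding Gh_def by (simp add: field_simps)

lemma Gh_zero: "Gh S b b = 0"
  unfolding Gh_def by simp

lemma gen1: "(x::real) \<noteq> 0 \<Longrightarrow> x / y * (p / q * (c / x)) = p * c / (y * q)"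
  by (simp add: field_simps)

lemma gen2: "(x::real) \<noteq> 0 \<Longrightarrow> (k * x) / y * (p / q * (c / x)) = k * p * c / (y * q)"
  by (simp add: field_simps)

lemma gen3: "(k::real) \<noteq> 0 \<Longrightarrow> p / q * (c / z) = k * p * c / (k * z * q)"
  by (simp add: field_simps)

lemma harm_alg:
  fixes r a B C :: real
  assumes h: "1 + r \<noteq> 0" "1 - a \<noteq> 0" "1 - r * a \<noteq> 0" "1 - r * r * a \<noteq> 0" "B - C \<noteq> 0"
  shows "(1 - r * r * a) / ((1 + r) * (1 - r * a)) * ((B - r * r * a) / (B - C) * ((1 - C) / (1 - r * r * a)))
       + (1 - (1 - r * r * a) / ((1 + r) * (1 - r * a))) * ((B - a) / (B - C) * ((1 - C) / (1 - a)))
       = (B - r * a) / (B - C) * ((1 - C) / (1 - r * a))"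
proof -
  define D where "D = (1 + r) * (1 - r * a) * (B - C)"
  have D0: "D \<noteq> 0" unfolding D_def using h by simp
  have s1: "1 - (1 - r * r * a) / ((1 + r) * (1 - r * a)) = r * (1 - a) / ((1 + r) * (1 - r * a))"
  proof -
    have Y0: "(1 + r) * (1 - r * a) \<noteq> 0" using h by simp
    have "1 - (1 - r * r * a) / ((1 + r) * (1 - r * a)) = ((1 + r) * (1 - r * a) - (1 - r * r * a)) / ((1 + r) * (1 - r * a))"
      using Y0 by (simp add: diff_divide_distrib)
    also have "(1 + r) * (1 - r * a) - (1 - r * r * a) = r * (1 - a)" by algebra
    finally show ?thesis .
  qed
  have t1: "(1 - r * r * a) / ((1 + r) * (1 - r * a)) * ((B - r * r * a) / (B - C) * ((1 - C) / (1 - r * r * a)))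
      = (B - r * r * a) * (1 - C) / D"
    unfolding D_def using h(4) by (rule gen1)
  have t2: "r * (1 - a) / ((1 + r) * (1 - r * a)) * ((B - a) / (B - C) * ((1 - C) / (1 - a)))
      = r * (B - a) * (1 - C) / D"
    unfolding D_def using h(2) by (rule gen2)
  have t3: "(B - r * a) / (B - C) * ((1 - C) / (1 - r * a)) = (1 + r) * (B - r * a) * (1 - C) / D"
    unfolding D_def using h(1) by (rule gen3)
  have t4: "(B - r * r * a) * (1 - C) + r * (B - a) * (1 - C) = (1 + r) * (B - r * a) * (1 - C)"
    by algebra
  have "(B - r * r * a) * (1 - C) / D + r * (B - a) * (1 - C) / D = ((B - r * r * a) * (1 - C) + r * (B - a) * (1 - C)) / D"
    by (rule add_divide_distrib[symmetric])
  also have "\<dots> = (1 + r) * (B - r * a) * (1 - C) / D" unfolding t4 ..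
  finally show ?thesis unfolding s1 t1 t2 t3 .

qed

lemma Gp_harm:
  assumes r: "0 < r" "r < 1" and w: "1 \<le> w" "b < w" "w \<le> S"
  shows "upr r w * Gp r S b (w + 1) + (1 - upr r w) * Gp r S b (w - 1) = Gp r S b w"
proof -
  obtain v where v: "w = Suc v" using w by (cases w) auto
  have C: "r ^ b - r ^ (S+1) \<noteq> 0"
  proof -
    have "r ^ (S+1) < r ^ b" using r w by (intro power_strict_decreasing) auto
    then show ?thesis by simp
  qed
  show ?thesis
  proof (cases "v = 0")
    case True
    then have w1: "w = 1" "b = 0" using v w by auto
    have rr: "r * r < 1 * 1" using r by (intro mult_strict_mono) auto
    have "Gp r S 0 2 = 1" "Gp r S 0 1 = 1"
      using C r w1 rr unfolding Gp_def by (simp_all add: power2_eq_square)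
    then show ?thesis using w1 upr1[OF r] by (simp add: numeral_2_eq_2)
  next
    case False
    have ne: "1 - r ^ n \<noteq> 0" if "1 \<le> n" for n
    proof -
      have "r ^ n < 1" using r that by (intro pow_lt1) auto
      then show ?thesis by simp
    qed
    have h: "1 - r ^ v \<noteq> 0" "1 - r * r ^ v \<noteq> 0" "1 - r * r * r ^ v \<noteq> 0"
      using ne[of v] ne[of "Suc v"] ne[of "Suc (Suc v)"] False by (auto simp: mult.assoc)
    have "1 + r \<noteq> 0" using r by simp
    from harm_alg[OF this h C]
    show ?thesis unfolding v Gp_def upr_def by (simp add: mult.assoc)
  qed
qed

lemma Gh_alt: "Gh S b w = (real S + 1) / (real S + 1 - real b) * ((real w - real b) / real w)"
  unfolding Gh_def by (simp add: divide_inverse ac_simps)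

lemma gen4: "(x::real) \<noteq> 0 \<Longrightarrow> x / y * (c * (p / x)) = c * p / y"
  by (simp add: field_simps)

lemma harm_h:
  fixes W B c :: real
  assumes "W \<noteq> 0" "W + 1 \<noteq> 0" "W - 1 \<noteq> 0"
  shows "(W + 1) / (2 * W) * (c * ((W + 1 - B) / (W + 1))) + (1 - (W + 1) / (2 * W)) * (c * ((W - 1 - B) / (W - 1)))
     = c * ((W - B) / W)"
proof -
  have a1: "(W + 1) / (2 * W) * (c * ((W + 1 - B) / (W + 1))) = c * (W + 1 - B) / (2 * W)"
    using assms(2) by (rule gen4)
  have a2: "1 - (W + 1) / (2 * W) = (W - 1) / (2 * W)"
    using assms by (simp add: field_simps)
  have a3: "(W - 1) / (2 * W) * (c * ((W - 1 - B) / (W - 1))) = c * (W - 1 - B) / (2 * W)"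
    using assms(3) by (rule gen4)
  have a4: "c * (W + 1 - B) / (2 * W) + c * (W - 1 - B) / (2 * W) = c * ((W - B) / W)"
    using assms by (simp add: field_simps)
  show ?thesis unfolding a1 a2 a3 a4 ..
qed

lemma Gh_harm:
  assumes w: "1 \<le> w" "b < w" "w \<le> S"
  shows "up_half w * Gh S b (w + 1) + (1 - up_half w) * Gh S b (w - 1) = Gh S b w"
proof -
  obtain v where v: "w = Suc v" using w by (cases w) auto
  show ?thesis
  proof (cases "v = 0")
    case True
    then have w1: "w = 1" "b = 0" using v w by auto
    then show ?thesis unfolding Gh_def up_half_def by (simp add: field_simps)
  next
    case False
    define W where "W = real w"
    have W: "W \<noteq> 0" "W + 1 \<noteq> 0" "W - 1 \<noteq> 0" unfolding W_def using v False by auto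
    have e1: "real (w + 1) = W + 1" "real (w - 1) = W - 1" unfolding W_def using w by auto
    have u: "up_half w = (W + 1) / (2 * W)" unfolding up_half_def W_def by simp
    show ?thesis unfolding Gh_alt u e1 W_def[symmetric] by (rule harm_h[OF W])
  qed
qed

lemma Gp_bnd:
  assumes r: "0 < r" "r < 1" and w: "b < w" "w \<le> S + 1"
  shows "0 \<le> Gp r S b w \<and> Gp r S b w \<le> 1"
proof -
  define B where "B = r ^ b"
  define W where "W = r ^ w"
  define C where "C = r ^ (S + 1)"
  have WB: "W < B" unfolding W_def B_def using r w by (intro power_strict_decreasing) auto
  have CW: "C \<le> W" unfolding W_def C_def using r w by (intro power_decreasing) auto
  have W1: "W < 1" unfolding W_def using r w by (intro pow_lt1) auto
  have B1: "B \<le> 1" unfolding B_def using r by (intro power_le_one) auto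
  have C0: "0 < C" unfolding C_def using r by simp
  have e: "(B - C) * (1 - W) - (B - W) * (1 - C) = (1 - B) * (W - C)" by algebra
  have f: "0 \<le> (1 - B) * (W - C)" using B1 CW by simp
  have g: "(B - W) * (1 - C) \<le> (B - C) * (1 - W)" using e f by linarith
  have eq: "Gp r S b w = ((B - W) * (1 - C)) / ((B - C) * (1 - W))"
    unfolding Gp_def B_def W_def C_def by simp
  have pos: "0 < (B - C) * (1 - W)" using WB CW W1 by simp
  have nn: "0 \<le> (B - W) * (1 - C)" using WB CW W1 C0 B1 by simp
  show ?thesis unfolding eq using pos nn g by (simp add: divide_le_eq_1)
qed

lemma Gh_bnd:
  assumes w: "b < w" "w \<le> S + 1"
  shows "0 \<le> Gh S b w \<and> Gh S b w \<le> 1"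
proof -
  have eq: "Gh S b w = ((real w - real b) * (real S + 1)) / ((real S + 1 - real b) * real w)"
    unfolding Gh_def by simp
  have pos: "0 < (real S + 1 - real b) * real w" using w by simp
  have nn: "0 \<le> (real w - real b) * (real S + 1)" using w by simp
  have e: "(real S + 1 - real b) * real w - (real w - real b) * (real S + 1) = real b * (real S + 1 - real w)"
    by algebra
  have "0 \<le> real b * (real S + 1 - real w)" using w by simp
  then have g: "(real w - real b) * (real S + 1) \<le> (real S + 1 - real b) * real w" using e by linarith
  show ?thesis unfolding eq using pos nn g by (simp add: divide_le_eq_1)
qed

definition AA :: "real \<Rightarrow> nat \<Rightarrow> real" where
  "AA r n = (\<Sum>i<n. r ^ i)"

lemma AA_one_minus: "1 - r ^ n = (1 - r) * AA r n"
  unfolding AA_def by (rule one_diff_power_eq)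

lemma AA_Suc: "AA r (Suc n) = AA r n + r ^ n"
  unfolding AA_def by simp

lemma AA_pos: "0 < r \<Longrightarrow> 1 \<le> n \<Longrightarrow> 0 < AA r n"
  unfolding AA_def by (intro sum_pos) (auto simp: lessThan_empty_iff)

lemma cross_le:
  fixes x y u v :: real
  assumes "0 < y" "0 < v" "x * v \<le> u * y"
  shows "x / y \<le> u / v"
  using assms by (simp add: field_simps)

lemma amgm:
  fixes r :: real
  assumes r: "0 < r"
  shows "(real n + 1)^2 * r ^ n \<le> (AA r (n + 1))^2"
proof -
  define s where "s = sqrt r"
  have s0: "0 < s" unfolding s_def using r by simp
  have rs: "r = s^2" unfolding s_def using r by simp
  have key: "2 * s ^ n \<le> r ^ i + r ^ (n - i)" if "i \<le> n" for i
  proof -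
    have e: "s ^ n = s ^ i * s ^ (n - i)" using that by (simp add: power_add[symmetric])
    have "r ^ i = (s ^ i)^2" "r ^ (n - i) = (s ^ (n - i))^2" unfolding rs by (simp_all add: power_mult[symmetric] mult.commute)
    moreover have "0 \<le> (s ^ i - s ^ (n - i))^2" by simp
    ultimately show ?thesis unfolding e by (simp add: power2_eq_square algebra_simps)
  qed
  have refl: "(\<Sum>i<n+1. r ^ (n - i)) = AA r (n + 1)"
    unfolding AA_def using sum.nat_diff_reindex[of "\<lambda>i. r ^ i" "n + 1"] by simp
  have "(\<Sum>i<n+1. 2 * s ^ n) \<le> (\<Sum>i<n+1. r ^ i + r ^ (n - i))"
    by (intro sum_mono key) auto
  also have "\<dots> = 2 * AA r (n + 1)"
    unfolding sum.distrib refl by (simp add: AA_def)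
  finally have sm: "(\<Sum>i<n+1. 2 * s ^ n) \<le> 2 * AA r (n + 1)" .
  have sumc: "(\<Sum>i<n+1. 2 * s ^ n) = 2 * ((real n + 1) * s ^ n)" by (simp add: algebra_simps)
  have h: "(real n + 1) * s ^ n \<le> AA r (n + 1)" using sm sumc by linarith
  have "0 \<le> (real n + 1) * s ^ n" using s0 by simp
  then have "((real n + 1) * s ^ n)^2 \<le> (AA r (n + 1))^2" using power_mono[OF h, of 2] by simp
  moreover have "((real n + 1) * s ^ n)^2 = (real n + 1)^2 * r ^ n"
    unfolding rs by (simp add: power_mult_distrib power_mult[symmetric] mult.commute)
  ultimately show ?thesis by simp
qed

definition RR :: "real \<Rightarrow> nat \<Rightarrow> real" where
  "RR r n = (real n + 1) * AA r n / (real n * AA r (n + 1))"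

lemma RR_dec:
  assumes r: "0 < r" "r < 1" and n: "1 \<le> n"
  shows "RR r (n + 1) \<le> RR r n"
proof -
  define a where "a = AA r n"
  define t where "t = r ^ n"
  define m where "m = real n + 1"
  have A1: "AA r (n + 1) = a + t" unfolding a_def t_def by (simp add: AA_Suc)
  have A2: "AA r (n + 2) = a + t + r * t" unfolding a_def t_def
    by (simp add: AA_Suc numeral_2_eq_2)
  have a0: "0 < a" unfolding a_def using r n by (intro AA_pos) auto
  have t0: "0 < t" unfolding t_def using r by simp
  have hyp: "(1 - r) * a = 1 - t" unfolding a_def t_def by (simp add: AA_one_minus)
  have am0: "m^2 * t \<le> (AA r (n + 1))^2" unfolding m_def t_def using amgm[OF r(1), of n] by simp
  have am: "m^2 * t \<le> (a + t)^2" using am0 unfolding A1 .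
  have iden: "m^2 * a * (a + t + r * t) - (m^2 - 1) * (a + t)^2
      = (a + t)^2 - m^2 * t + m^2 * t * (1 - t - (1 - r) * a)" by algebra
  have core: "(m^2 - 1) * (a + t)^2 \<le> m^2 * a * (a + t + r * t)"
    using iden hyp am by simp
  have nn: "real n * (real n + 2) = m^2 - 1" unfolding m_def by (simp add: power2_eq_square algebra_simps)
  have q1: "real (n + 1) + 1 = real n + 2" "real (n + 1) = real n + 1" by simp_all
  have q2: "AA r (n + 1 + 1) = a + t + r * t" using A2 by (simp add: numeral_2_eq_2)
  have "RR r (n + 1) = (real n + 2) * (a + t) / ((real n + 1) * (a + t + r * t))"
    unfolding RR_def A1 q1 q2 by (simp add: add.assoc)
  also have "\<dots> \<le> (real n + 1) * a / (real n * (a + t))"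
  proof (rule cross_le)
    show "0 < (real n + 1) * (a + t + r * t)" using a0 t0 r by (simp add: add_pos_pos)
    show "0 < real n * (a + t)" using a0 t0 n by simp
    have "(real n + 2) * (a + t) * (real n * (a + t)) = (real n * (real n + 2)) * (a + t)^2"
      by (simp add: power2_eq_square algebra_simps)
    also have "\<dots> = (m^2 - 1) * (a + t)^2" unfolding nn ..
    also have "\<dots> \<le> m^2 * a * (a + t + r * t)" by (rule core)
    also have "\<dots> = (real n + 1) * a * ((real n + 1) * (a + t + r * t))"
      unfolding m_def by (simp add: power2_eq_square algebra_simps)
    finally show "(real n + 2) * (a + t) * (real n * (a + t)) \<le> (real n + 1) * a * ((real n + 1) * (a + t + r * t))" .
  qed
  also have "\<dots> = RR r n" unfolding RR_def A1 a_def ..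
  finally show ?thesis .
qed

lemma RR_mono:
  assumes r: "0 < r" "r < 1" and jk: "1 \<le> j" "j \<le> k"
  shows "RR r k \<le> RR r j"
  using jk(2)
proof (induction k rule: dec_induct)
  case base
  then show ?case by simp
next
  case (step k)
  have "RR r (k + 1) \<le> RR r k" using r jk step by (intro RR_dec) auto
  then show ?case using step by simp
qed

lemma Gp_ge_Gh:
  assumes r: "0 < r" "r < 1" and bk: "b < k"
  shows "Gh k b k \<le> Gp r k b k"
proof -
  define j where "j = k - b"
  have j1: "1 \<le> j" "j \<le> k" unfolding j_def using bk by auto
  have kj: "k = b + j" unfolding j_def using bk by simp
  have Aj: "0 < AA r j" "0 < AA r (j + 1)" "0 < AA r k" "0 < AA r (k + 1)"
    using j1 r by (auto intro!: AA_pos)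
  have rb: "0 < r ^ b" using r by simp
  have r1: "0 < 1 - r" using r by simp
  have Gp_eq: "Gp r k b k = AA r j / AA r (j + 1) * (AA r (k + 1) / AA r k)"
  proof -
    have e1: "r ^ b - r ^ k = r ^ b * ((1 - r) * AA r j)"
      unfolding kj AA_one_minus[symmetric] by (simp add: power_add algebra_simps)
    have e2: "r ^ b - r ^ (k + 1) = r ^ b * ((1 - r) * AA r (j + 1))"
      unfolding kj AA_one_minus[symmetric] by (simp add: power_add algebra_simps)
    have e3: "1 - r ^ (k + 1) = (1 - r) * AA r (k + 1)" by (rule AA_one_minus)
    have e4: "1 - r ^ k = (1 - r) * AA r k" by (rule AA_one_minus)
    have c1: "r ^ b * ((1 - r) * AA r j) / (r ^ b * ((1 - r) * AA r (j + 1))) = AA r j / AA r (j + 1)"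
      using rb r1 r Aj by simp
    have c2: "(1 - r) * AA r (k + 1) / ((1 - r) * AA r k) = AA r (k + 1) / AA r k"
      using r1 by simp
    show ?thesis unfolding Gp_def e1 e2 e3 e4 c1 c2 ..
  qed
  have Gh_eq: "Gh k b k = real j / (real j + 1) * ((real k + 1) / real k)"
    unfolding Gh_def j_def using bk by (simp add: of_nat_diff)
  have R: "RR r k \<le> RR r j" using RR_mono[OF r j1] .
  then have "(real k + 1) * AA r k / (real k * AA r (k + 1)) \<le> (real j + 1) * AA r j / (real j * AA r (j + 1))"
    unfolding RR_def .
  then have X: "(real k + 1) * AA r k * (real j * AA r (j + 1)) \<le> (real j + 1) * AA r j * (real k * AA r (k + 1))"
    using Aj j1 by (simp add: field_simps)
  show ?thesis unfolding Gp_eq Gh_eq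
  proof -
    have "real j / (real j + 1) * ((real k + 1) / real k) = (real j * (real k + 1)) / ((real j + 1) * real k)"
      by simp
    also have "\<dots> \<le> (AA r j * AA r (k + 1)) / (AA r (j + 1) * AA r k)"
    proof (rule cross_le)
      show "0 < (real j + 1) * real k" using j1 by simp
      show "0 < AA r (j + 1) * AA r k" using Aj by simp
      show "real j * (real k + 1) * (AA r (j + 1) * AA r k) \<le> AA r j * AA r (k + 1) * ((real j + 1) * real k)"
        using X by (simp add: algebra_simps)
    qed
    also have "\<dots> = AA r j / AA r (j + 1) * (AA r (k + 1) / AA r k)" by simp
    finally show "real j / (real j + 1) * ((real k + 1) / real k) \<le> AA r j / AA r (j + 1) * (AA r (k + 1) / AA r k)" .
  qed
qed

definition bb :: "nat \<Rightarrow> real \<Rightarrow> nat \<Rightarrow> nat" where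
  "bb N x S = Max (insert 0 {w \<in> {1..S}. Bad N x (w, S)})"

lemma bad_mono:
  assumes N: "2 \<le> N" and w: "1 \<le> w'" "w' \<le> w" and b: "Bad N x (w, S)"
  shows "Bad N x (w', S)"
proof -
  have "log N (real w') \<le> log N (real w)" using N w by (subst log_le_cancel_iff) auto
  then show ?thesis using b by auto
qed

lemma bad_SN: "Bad N x (w, S) \<Longrightarrow> 1 \<le> S \<and> S \<le> N"
  by simp

declare Bad.simps[simp del]

lemma bb_le: "bb N x S \<le> S"
  unfolding bb_def by (intro Max.boundedI) auto

lemma bad_char:
  assumes N: "2 \<le> N" and w: "1 \<le> w" "w \<le> S"
  shows "Bad N x (w, S) \<longleftrightarrow> w \<le> bb N x S"
proof
  assume "Bad N x (w, S)"
  then have "w \<in> insert 0 {w \<in> {1..S}. Bad N x (w, S)}" using w by auto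
  then show "w \<le> bb N x S" unfolding bb_def by (intro Max_ge) auto
next
  assume wb: "w \<le> bb N x S"
  have "bb N x S \<in> insert 0 {w \<in> {1..S}. Bad N x (w, S)}"
    unfolding bb_def by (rule Max_in) auto
  moreover have "bb N x S \<noteq> 0" using wb w by auto
  ultimately have "Bad N x (bb N x S, S)" by auto
  then show "Bad N x (w, S)" using bad_mono[OF N w(1) wb] by blast
qed

lemma int_nxt:
  assumes w: "1 \<le> w" and u: "0 \<le> up w" "up w \<le> 1"
  shows "(\<integral>\<^sup>+u. f (nxtS up (w, S) u) \<partial>UU) =
    ennreal (up w) * f (w + 1, max S (w + 1)) + ennreal (1 - up w) * f (w - 1, max S (w - 1))"
proof -
  have "nxtS up (w, S) u = (if u < up w then (w + 1, max S (w + 1)) else (w - 1, max S (w - 1)))" for u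
    using w unfolding nxtS_def step_def by auto
  then have "(\<integral>\<^sup>+u. f (nxtS up (w, S) u) \<partial>UU) =
      (\<integral>\<^sup>+u. f (if u < up w then (w + 1, max S (w + 1)) else (w - 1, max S (w - 1))) \<partial>UU)"
    by simp
  also have "\<dots> = ennreal (up w) * f (w + 1, max S (w + 1)) + ennreal (1 - up w) * f (w - 1, max S (w - 1))"
    using u by (rule int_step)
  finally show ?thesis .
qed

lemma int_nxt0: "(\<integral>\<^sup>+u. f (nxtS up (0, S) u) \<partial>UU) = f (1, max S 1)"
proof -
  have "nxtS up (0, S) u = (1, max S 1)" for u unfolding nxtS_def step_def by simp
  then show ?thesis by (simp add: U.emeasure_space_1)
qed

locale hchain =
  fixes N :: nat and x :: real and G :: "nat \<Rightarrow> nat \<Rightarrow> nat \<Rightarrow> real" and up :: "nat \<Rightarrow> real"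
  assumes N2: "2 \<le> N"
  and G_top: "\<And>S b. b \<le> S \<Longrightarrow> G S b (S + 1) = 1"
  and G_zero: "\<And>S b. G S b b = 0"
  and G_harm: "\<And>S b w. 1 \<le> w \<Longrightarrow> b < w \<Longrightarrow> w \<le> S \<Longrightarrow>
                  up w * G S b (w + 1) + (1 - up w) * G S b (w - 1) = G S b w"
  and G_bnd: "\<And>S b w. b < w \<Longrightarrow> w \<le> S + 1 \<Longrightarrow> 0 \<le> G S b w \<and> G S b w \<le> 1"
  and up1: "up 1 = 1"
  and up_bnd: "\<And>k. 1 \<le> k \<Longrightarrow> 0 \<le> up k \<and> up k \<le> 1"
begin

definition Fk :: "nat \<Rightarrow> real" where
  "Fk k = (if Bad N x (k, k) then 0 else G k (bb N x k) k)"

definition TT :: "nat \<Rightarrow> real" where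
  "TT S = (\<Prod>k\<in>{Suc S..N}. Fk k)"

definition Q0 :: "nat \<Rightarrow> nat \<Rightarrow> real" where
  "Q0 w S = (if N < S then 1 else if Bad N x (w, S) then 0 else G S (bb N x S) w * TT S)"

definition QQ :: "nat \<Rightarrow> nat \<Rightarrow> real" where
  "QQ w S = (if w = 0 \<and> S \<le> N \<and> \<not> Bad N x (0, S) then Q0 1 (max S 1) else Q0 w S)"

lemma Fk_bnd: "0 \<le> Fk k \<and> Fk k \<le> 1"
proof (cases "Bad N x (k, k)")
  case True then show ?thesis unfolding Fk_def by simp
next
  case False
  show ?thesis
  proof (cases "k = 0")
    case True then show ?thesis unfolding Fk_def using G_zero bb_le[of N x 0] by simp
  next
    case k: False
    then have "bb N x k < k" using bad_char[OF N2, of k k x] False by simp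
    then show ?thesis unfolding Fk_def using False G_bnd[of "bb N x k" k k] by simp
  qed
qed

lemma TT_bnd: "0 \<le> TT S \<and> TT S \<le> 1"
  unfolding TT_def using Fk_bnd by (auto intro: prod_nonneg prod_le_1)

lemma TT_N: "TT N = 1"
  unfolding TT_def by simp

lemma TT_step: "S < N \<Longrightarrow> TT S = Fk (Suc S) * TT (Suc S)"
  unfolding TT_def by (subst prod.atLeast_Suc_atMost) auto

lemma Q0_bnd:
  assumes "1 \<le> w" "w \<le> S"
  shows "0 \<le> Q0 w S \<and> Q0 w S \<le> 1"
proof (cases "N < S \<or> Bad N x (w, S)")
  case True then show ?thesis unfolding Q0_def by auto
next
  case False
  then have "bb N x S < w" using bad_char[OF N2 assms] by simp
  then have "0 \<le> G S (bb N x S) w \<and> G S (bb N x S) w \<le> 1" using G_bnd assms by simp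
  then show ?thesis unfolding Q0_def using False TT_bnd[of S] by (simp add: mult_le_one)
qed

lemma QQ_bnd:
  assumes "w \<le> S"
  shows "0 \<le> QQ w S \<and> QQ w S \<le> 1"
proof (cases "w = 0")
  case True
  show ?thesis
  proof (cases "S \<le> N \<and> \<not> Bad N x (0, S)")
    case True
    then show ?thesis unfolding QQ_def using \<open>w = 0\<close> Q0_bnd[of 1 "max S 1"] by simp
  next
    case False
    then show ?thesis unfolding QQ_def Q0_def using \<open>w = 0\<close> by auto
  qed
next
  case False
  then show ?thesis unfolding QQ_def using Q0_bnd[of w S] assms by simp
qed

lemma QQ_bad: "Bad N x (w, S) \<Longrightarrow> QQ w S = 0"
  unfolding QQ_def Q0_def using bad_SN[of N x w S] by auto

lemma QQ_out: "N < S \<Longrightarrow> QQ w S = 1"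
  unfolding QQ_def Q0_def by auto

lemma QQ_zero: "S \<le> N \<Longrightarrow> \<not> Bad N x (0, S) \<Longrightarrow> QQ 1 (max S 1) = QQ 0 S"
  unfolding QQ_def by simp

lemma QQ_harm:
  assumes w: "1 \<le> w" "w \<le> S" and SN: "S \<le> N" and nb: "\<not> Bad N x (w, S)"
  shows "up w * QQ (w + 1) (max S (w + 1)) + (1 - up w) * QQ (w - 1) S = QQ w S"
proof -
  define b where "b = bb N x S"
  have bw: "b < w" unfolding b_def using bad_char[OF N2 w] nb by simp
  have Qw: "QQ w S = G S b w * TT S" unfolding QQ_def Q0_def b_def using w SN nb by simp
  have Qu: "QQ (w + 1) (max S (w + 1)) = G S b (w + 1) * TT S"
  proof (cases "w < S")
    case True
    then have nb': "\<not> Bad N x (w + 1, S)" using bad_char[OF N2, of "w + 1" S x] bw unfolding b_def by simp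
    have "max S (w + 1) = S" using True by simp
    then show ?thesis unfolding QQ_def Q0_def b_def using SN nb' by simp
  next
    case False
    then have wS: "w = S" using w by simp
    have top: "G S b (S + 1) = 1" using G_top bw wS by simp
    show ?thesis
    proof (cases "S = N")
      case True
      then show ?thesis using wS top TT_N unfolding QQ_def Q0_def by simp
    next
      case False
      then have SN': "S < N" using SN by simp
      have "QQ (S + 1) (S + 1) = Fk (Suc S) * TT (Suc S)"
        unfolding QQ_def Q0_def Fk_def using SN' by auto
      also have "\<dots> = TT S" using TT_step[OF SN'] by simp
      finally show ?thesis using wS top by simp
    qed
  qed
  show ?thesis
  proof (cases "w = 1")
    case True
    have "up 1 * G S b 2 + (1 - up 1) * G S b 0 = G S b 1"
      using G_harm[of 1 b S] bw w True by (simp add: numeral_2_eq_2)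
    then have "G S b 2 = G S b 1" using up1 by simp
    then show ?thesis using Qu Qw True up1 by (simp add: numeral_2_eq_2)
  next
    case False
    then have w2: "2 \<le> w" using w by simp
    have Qd: "QQ (w - 1) S = G S b (w - 1) * TT S"
    proof (cases "w - 1 = b")
      case True
      then have "Bad N x (w - 1, S)" using bad_char[OF N2, of "w - 1" S x] w2 w unfolding b_def by simp
      then show ?thesis using True G_zero QQ_bad by simp
    next
      case False
      then have "\<not> Bad N x (w - 1, S)" using bad_char[OF N2, of "w - 1" S x] w2 w bw unfolding b_def by simp
      then show ?thesis unfolding QQ_def Q0_def b_def using w2 SN by simp
    qed
    have "up w * (G S b (w + 1) * TT S) + (1 - up w) * (G S b (w - 1) * TT S)
        = (up w * G S b (w + 1) + (1 - up w) * G S b (w - 1)) * TT S" by (simp add: algebra_simps)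
    also have "\<dots> = G S b w * TT S" using G_harm[OF w(1) bw w(2)] by simp
    finally show ?thesis using Qu Qd Qw by simp
  qed
qed

lemma QQ_start: "QQ 0 0 = (\<Prod>k\<in>{1..N}. Fk k)"
proof -
  have "QQ 0 0 = Q0 1 1" unfolding QQ_def by (simp add: Bad.simps)
  also have "\<dots> = Fk 1 * TT 1" unfolding Q0_def Fk_def using N2 by auto
  also have "\<dots> = (\<Prod>k\<in>{1..N}. Fk k)" unfolding TT_def using N2
    by (subst prod.atLeast_Suc_atMost) auto
  finally show ?thesis .
qed

lemma Inv_nxt: "fst s \<le> snd s \<Longrightarrow> fst (nxtS up s u) \<le> snd (nxtS up s u)"
  unfolding nxtS_def by simp

lemma reach_upper:
  "emeasure (stream_space UU) {us \<in> space (stream_space UU). \<exists>n. Bad N x (traj (nxtS up) (0,0) us n)}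
     \<le> ennreal (1 - QQ 0 0)"
proof -
  define g where "g s = ennreal (1 - QQ (fst s) (snd s))" for s
  have "emeasure (stream_space UU) {us \<in> space (stream_space UU). \<exists>n. Bad N x (traj (nxtS up) (0,0) us n)} \<le> g (0,0)"
  proof (rule reach_bound[where Inv="\<lambda>s. fst s \<le> snd s"])
    show "\<And>s. nxtS up s \<in> UU \<rightarrow>\<^sub>M count_space UNIV" by (rule nxt_meas)
    show "\<And>s u. fst s \<le> snd s \<Longrightarrow> fst (nxtS up s u) \<le> snd (nxtS up s u)" by (rule Inv_nxt)
    show "fst (0::nat, 0::nat) \<le> snd (0::nat, 0::nat)" by simp
    fix s :: "nat \<times> nat"
    obtain w S where s: "s = (w, S)" by fastforce
    show "1 \<le> g s" if "fst s \<le> snd s" "Bad N x s"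
      using that QQ_bad unfolding g_def s by simp
    show "(\<integral>\<^sup>+u. g (nxtS up s u) \<partial>UU) \<le> g s" if I: "fst s \<le> snd s" and nb: "\<not> Bad N x s"
    proof (cases "N < S")
      case True
      have "g (nxtS up s u) = 0" for u
        unfolding g_def using QQ_out True by (simp add: nxtS_def s)
      then show ?thesis by simp
    next
      case False
      then have SN: "S \<le> N" by simp
      show ?thesis
      proof (cases "w = 0")
        case True
        have "(\<integral>\<^sup>+u. g (nxtS up s u) \<partial>UU) = g (1, max S 1)" unfolding s True by (rule int_nxt0)
        then show ?thesis unfolding g_def using QQ_zero SN nb s True by simp
      next
        case False
        then have w1: "1 \<le> w" by simp
        have wS: "w \<le> S" using I s by simp
        have ub: "0 \<le> up w" "up w \<le> 1" using up_bnd[OF w1] by auto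
        have b1: "0 \<le> QQ (w + 1) (max S (w + 1)) \<and> QQ (w + 1) (max S (w + 1)) \<le> 1" by (rule QQ_bnd) simp
        have b2: "0 \<le> QQ (w - 1) S \<and> QQ (w - 1) S \<le> 1" by (rule QQ_bnd) (use wS in simp)
        have mx: "max S (w - 1) = S" using wS by simp
        have "(\<integral>\<^sup>+u. g (nxtS up s u) \<partial>UU) = ennreal (up w) * g (w + 1, max S (w + 1)) + ennreal (1 - up w) * g (w - 1, S)"
          unfolding s using int_nxt[where f=g and S=S and up=up and w=w, OF w1 ub] mx by simp
        also have "\<dots> = ennreal (up w * (1 - QQ (w + 1) (max S (w + 1))) + (1 - up w) * (1 - QQ (w - 1) S))"
          unfolding g_def using ub b1 b2 by (simp add: ennreal_mult ennreal_plus)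
        also have "up w * (1 - QQ (w + 1) (max S (w + 1))) + (1 - up w) * (1 - QQ (w - 1) S)
            = 1 - (up w * QQ (w + 1) (max S (w + 1)) + (1 - up w) * QQ (w - 1) S)"
          by (simp add: algebra_simps)
        also have "\<dots> = 1 - QQ w S" using QQ_harm[OF w1 wS SN] nb s by simp
        finally show ?thesis unfolding g_def s by simp
      qed
    qed
  qed
  then show ?thesis unfolding g_def by simp
qed


lemma drift_ineq:
  fixes M w :: real
  assumes w: "1 \<le> w" "w \<le> M" and ub: "1 + 1 / w \<le> 2 * u"
  shows "u * (M + 1 - w) + (1 - u) * (M + 3 - w) \<le> (1 - 1 / (M * (M + 2))) * (M + 2 - w)"
proof -
  have a: "u * (M + 1 - w) + (1 - u) * (M + 3 - w) = M + 3 - w - 2 * u" by (simp add: algebra_simps)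
  have b: "(1 - 1 / (M * (M + 2))) * (M + 2 - w) = (M + 2 - w) - (M + 2 - w) / (M * (M + 2))"
    by (simp add: algebra_simps)
  have c: "(M + 2 - w) / (M * (M + 2)) \<le> 1 / w"
  proof (rule cross_le)
    show "0 < M * (M + 2)" using w by simp
    show "0 < w" using w by simp
    have "(M + 2 - w) * w \<le> (M + 2 - w) * M" using w by (intro mult_left_mono) auto
    also have "\<dots> \<le> (M + 2) * M" using w by (intro mult_right_mono) auto
    finally show "(M + 2 - w) * w \<le> 1 * (M * (M + 2))" by (simp add: algebra_simps)
  qed
  show ?thesis unfolding a b using ub c by linarith
qed

lemma safe_upper:
  assumes drift: "\<And>w. 1 \<le> w \<Longrightarrow> 1 + 1 / real w \<le> 2 * up w"
  shows "measure (stream_space UU) {us \<in> space (stream_space UU). \<forall>n. \<not> Bad N x (traj (nxtS up) (0,0) us n)}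
     \<le> QQ 0 0"
proof -
  define Qf where "Qf s = (if fst s \<le> snd s then QQ (fst s) (snd s) else 1)" for s
  define \<phi> where "\<phi> s = (if snd s \<le> N \<and> fst s \<le> snd s then real N + 2 - real (fst s) else 0)" for s
  define \<theta> where "\<theta> = 1 - 1 / (real N * (real N + 2))"
  have N1: "1 \<le> real N" using N2 by simp
  have th: "0 \<le> \<theta>" "\<theta> < 1"
  proof -
    have "1 * 1 \<le> real N * (real N + 2)" using N1 by (intro mult_mono) auto
    then have "1 \<le> real N * (real N + 2)" by simp
    then show "0 \<le> \<theta>" "\<theta> < 1" unfolding \<theta>_def using N1 by (auto simp: field_simps)
  qed
  have "measure (stream_space UU) {us \<in> space (stream_space UU). \<forall>n. \<not> Bad N x (traj (nxtS up) (0,0) us n)} \<le> Qf (0,0)"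
  proof (rule safe_bound[where Inv="\<lambda>s. fst s \<le> snd s" and \<phi>=\<phi> and \<theta>=\<theta>])
    show "\<And>s. nxtS up s \<in> UU \<rightarrow>\<^sub>M count_space UNIV" by (rule nxt_meas)
    show "\<And>s u. fst s \<le> snd s \<Longrightarrow> fst (nxtS up s u) \<le> snd (nxtS up s u)" by (rule Inv_nxt)
    show "fst (0::nat, 0::nat) \<le> snd (0::nat, 0::nat)" by simp
    show "0 \<le> \<theta>" "\<theta> < 1" by (rule th)+
    show "0 \<le> Qf s" for s unfolding Qf_def using QQ_bnd by auto
    show "0 \<le> \<phi> s" for s unfolding \<phi>_def by auto
    fix s :: "nat \<times> nat"
    obtain w S where s: "s = (w, S)" by fastforce
    show "1 \<le> Qf s + \<phi> s" if I: "fst s \<le> snd s" and nb: "\<not> Bad N x s"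
    proof (cases "N < S")
      case True then show ?thesis using QQ_out I unfolding Qf_def \<phi>_def s by simp
    next
      case False
      then have "\<phi> s = real N + 2 - real w" "w \<le> N" using I unfolding \<phi>_def s by auto
      moreover have "0 \<le> Qf s" unfolding Qf_def using QQ_bnd by auto
      ultimately show ?thesis by simp
    qed
    show "(\<integral>\<^sup>+u. ennreal (Qf (nxtS up s u)) \<partial>UU) \<le> ennreal (Qf s) \<and>
          (\<integral>\<^sup>+u. ennreal (\<phi> (nxtS up s u)) \<partial>UU) \<le> ennreal (\<theta> * \<phi> s)"
      if I: "fst s \<le> snd s" and nb: "\<not> Bad N x s" and Q1: "Qf s < 1"
    proof -
      have wS: "w \<le> S" using I s by simp
      have SN: "S \<le> N" using Q1 QQ_out wS unfolding Qf_def s by (cases "N < S") auto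
      have Qfs: "Qf s = QQ w S" unfolding Qf_def s using wS by simp
      have phs: "\<phi> s = real N + 2 - real w" unfolding \<phi>_def s using wS SN by simp
      show ?thesis
      proof (cases "w = 0")
        case True
        have S1: "max S 1 \<le> N" using SN N2 by simp
        have i1: "(\<integral>\<^sup>+u. ennreal (Qf (nxtS up s u)) \<partial>UU) = ennreal (Qf (1, max S 1))"
          unfolding s True by (rule int_nxt0)
        have i2: "(\<integral>\<^sup>+u. ennreal (\<phi> (nxtS up s u)) \<partial>UU) = ennreal (\<phi> (1, max S 1))"
          unfolding s True by (rule int_nxt0)
        have q: "Qf (1, max S 1) = QQ 0 S" unfolding Qf_def using QQ_zero SN nb s True by simp
        have p: "\<phi> (1, max S 1) = real N + 1" unfolding \<phi>_def using S1 by simp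
        have p2: "real N + 1 \<le> \<theta> * (real N + 2)"
        proof -
          have pos: "real N * (real N + 2) \<noteq> 0" "real N \<noteq> 0" using N1 by auto
          have "\<theta> * (real N + 2) = real N + 2 - 1 / real N" unfolding \<theta>_def using pos by (simp add: field_simps)
          moreover have "1 / real N \<le> 1" using N1 by simp
          ultimately show ?thesis by simp
        qed
        have e1: "Qf s = QQ 0 S" using Qfs True by simp
        have e2: "\<theta> * \<phi> s = \<theta> * (real N + 2)" using phs True by simp
        have l2: "ennreal (real N + 1) \<le> ennreal (\<theta> * (real N + 2))" by (rule ennreal_leI) (rule p2)
        show ?thesis unfolding i1 i2 q p e1 e2 using l2 by (intro conjI order_refl)
      next
        case False
        then have w1: "1 \<le> w" by simp
        have ub: "0 \<le> up w" "up w \<le> 1" using up_bnd[OF w1] by auto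
        have mx: "max S (w - 1) = S" using wS by simp
        have b1: "0 \<le> QQ (w + 1) (max S (w + 1)) \<and> QQ (w + 1) (max S (w + 1)) \<le> 1" by (rule QQ_bnd) simp
        have b2: "0 \<le> QQ (w - 1) S \<and> QQ (w - 1) S \<le> 1" by (rule QQ_bnd) (use wS in simp)
        have qu: "Qf (w + 1, max S (w + 1)) = QQ (w + 1) (max S (w + 1))" unfolding Qf_def by simp
        have qd: "Qf (w - 1, S) = QQ (w - 1) S" unfolding Qf_def using wS by simp
        have i1: "(\<integral>\<^sup>+u. ennreal (Qf (nxtS up s u)) \<partial>UU) =
            ennreal (up w) * ennreal (Qf (w + 1, max S (w + 1))) + ennreal (1 - up w) * ennreal (Qf (w - 1, S))"
          unfolding s using int_nxt[where f="\<lambda>s. ennreal (Qf s)" and S=S and up=up and w=w, OF w1 ub] mx by simp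
        also have "\<dots> = ennreal (up w * QQ (w + 1) (max S (w + 1)) + (1 - up w) * QQ (w - 1) S)"
          unfolding qu qd using ub b1 b2 by (simp add: ennreal_mult ennreal_plus)
        also have "\<dots> = ennreal (Qf s)" unfolding Qfs using QQ_harm[OF w1 wS SN] nb s by simp
        finally have A: "(\<integral>\<^sup>+u. ennreal (Qf (nxtS up s u)) \<partial>UU) \<le> ennreal (Qf s)" by simp
        define pu where "pu = \<phi> (w + 1, max S (w + 1))"
        have pu: "0 \<le> pu" "pu \<le> real N + 1 - real w" unfolding pu_def \<phi>_def using wS SN by auto
        have pd: "\<phi> (w - 1, S) = real N + 3 - real w" unfolding \<phi>_def using wS SN w1 by (simp add: of_nat_diff)
        have i2: "(\<integral>\<^sup>+u. ennreal (\<phi> (nxtS up s u)) \<partial>UU) =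
            ennreal (up w) * ennreal pu + ennreal (1 - up w) * ennreal (real N + 3 - real w)"
          unfolding s pu_def pd[symmetric] using int_nxt[where f="\<lambda>s. ennreal (\<phi> s)" and S=S and up=up and w=w, OF w1 ub] mx by simp
        also have "\<dots> = ennreal (up w * pu + (1 - up w) * (real N + 3 - real w))"
          using ub pu wS SN by (simp add: ennreal_mult ennreal_plus)
        also have "\<dots> \<le> ennreal (\<theta> * \<phi> s)"
        proof (rule ennreal_leI)
          have "up w * pu \<le> up w * (real N + 1 - real w)" using ub pu by (intro mult_left_mono) auto
          moreover have "up w * (real N + 1 - real w) + (1 - up w) * (real N + 3 - real w)
              \<le> (1 - 1 / (real N * (real N + 2))) * (real N + 2 - real w)"
            by (rule drift_ineq) (use w1 wS SN drift[OF w1] in auto)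
          ultimately show "up w * pu + (1 - up w) * (real N + 3 - real w) \<le> \<theta> * \<phi> s"
            unfolding phs \<theta>_def by linarith
        qed
        finally show ?thesis using A by simp
      qed
    qed
  qed
  then show ?thesis unfolding Qf_def by simp
qed

end

theorem corollaryA5:
  fixes p x :: real and N :: nat
  assumes "1/2 < p" and "p < 1" and "2 \<le> N"
  shows "measure noise {us \<in> space noise. M_N N (chain_path (up_p p) us) > x}
         \<le> measure noise {us \<in> space noise. M_N N (chain_path up_half us) > x}"
proof -
  note N = assms(3)
  define r where "r = (1 - p) / p"
  have r: "0 < r" "r < 1" unfolding r_def using assms by (auto simp: field_simps)
  interpret P: hchain N x "Gp r" "upr r"
  proof
    show "2 \<le> N" by (rule N)
    show "\<And>S b. b \<le> S \<Longrightarrow> Gp r S b (S + 1) = 1" using Gp_top r by blast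
    show "\<And>S b. Gp r S b b = 0" by (rule Gp_zero)
    show "\<And>S b w. 1 \<le> w \<Longrightarrow> b < w \<Longrightarrow> w \<le> S \<Longrightarrow>
        upr r w * Gp r S b (w + 1) + (1 - upr r w) * Gp r S b (w - 1) = Gp r S b w"
      using Gp_harm r by blast
    show "\<And>S b w. b < w \<Longrightarrow> w \<le> S + 1 \<Longrightarrow> 0 \<le> Gp r S b w \<and> Gp r S b w \<le> 1"
      using Gp_bnd r by blast
    show "upr r 1 = 1" using upr1 r by blast
    show "\<And>k. 1 \<le> k \<Longrightarrow> 0 \<le> upr r k \<and> upr r k \<le> 1" using upr_bnd r by blast
  qed
  interpret H: hchain N x Gh up_half
  proof
    show "2 \<le> N" by (rule N)
    show "\<And>S b. b \<le> S \<Longrightarrow> Gh S b (S + 1) = 1" using Gh_top by blast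
    show "\<And>S b. Gh S b b = 0" by (rule Gh_zero)
    show "\<And>S b w. 1 \<le> w \<Longrightarrow> b < w \<Longrightarrow> w \<le> S \<Longrightarrow>
        up_half w * Gh S b (w + 1) + (1 - up_half w) * Gh S b (w - 1) = Gh S b w"
      using Gh_harm by blast
    show "\<And>S b w. b < w \<Longrightarrow> w \<le> S + 1 \<Longrightarrow> 0 \<le> Gh S b w \<and> Gh S b w \<le> 1"
      using Gh_bnd by blast
    show "up_half 1 = 1" by (rule uph1)
    show "\<And>k. 1 \<le> k \<Longrightarrow> 0 \<le> up_half k \<and> up_half k \<le> 1" using uph_bnd by blast
  qed
  have upeq: "up_p p = upr r" unfolding r_def by (rule up_p_eq)
  define E1 where "E1 = {us \<in> space (stream_space UU). \<exists>n. Bad N x (traj (nxtS (upr r)) (0,0) us n)}"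
  define E2 where "E2 = {us \<in> space (stream_space UU). \<exists>n. Bad N x (traj (nxtS up_half) (0,0) us n)}"
  define F2 where "F2 = {us \<in> space (stream_space UU). \<forall>n. \<not> Bad N x (traj (nxtS up_half) (0,0) us n)}"
  have ev1: "{us \<in> space noise. M_N N (chain_path (up_p p) us) > x} = E1"
    unfolding E1_def upeq by (rule event_eq[OF N])
  have ev2: "{us \<in> space noise. M_N N (chain_path up_half us) > x} = E2"
    unfolding E2_def by (rule event_eq[OF N])
  have m1: "measure (stream_space UU) E1 \<le> 1 - P.QQ 0 0"
  proof -
    have "emeasure (stream_space UU) E1 \<le> ennreal (1 - P.QQ 0 0)"
      unfolding E1_def by (rule P.reach_upper)
    moreover have "0 \<le> 1 - P.QQ 0 0" using P.QQ_bnd[of 0 0] by simp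
    ultimately show ?thesis by (simp add: S.emeasure_eq_measure)
  qed
  have m2: "measure (stream_space UU) F2 \<le> H.QQ 0 0"
    unfolding F2_def
  proof (rule H.safe_upper)
    fix w :: nat assume "1 \<le> w"
    then show "1 + 1 / real w \<le> 2 * up_half w" unfolding up_half_def by (simp add: field_simps)
  qed
  have E2m: "E2 \<in> sets (stream_space UU)"
  proof -
    note [measurable] = pred_traj[OF nxt_meas]
    show ?thesis unfolding E2_def by measurable
  qed
  have F2E2: "F2 = space (stream_space UU) - E2" unfolding F2_def E2_def by auto
  have m3: "measure (stream_space UU) F2 = 1 - measure (stream_space UU) E2"
    unfolding F2E2 by (rule S.prob_compl[OF E2m])
  have cmp: "H.QQ 0 0 \<le> P.QQ 0 0"
    unfolding H.QQ_start P.QQ_start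
  proof (rule prod_mono)
    fix k assume k: "k \<in> {1..N}"
    show "0 \<le> H.Fk k \<and> H.Fk k \<le> P.Fk k"
    proof (cases "Bad N x (k, k)")
      case True then show ?thesis unfolding H.Fk_def P.Fk_def by simp
    next
      case False
      then have bk: "bb N x k < k" using bad_char[OF N, of k k x] k by simp
      then show ?thesis unfolding H.Fk_def P.Fk_def using False Gh_bnd[of "bb N x k" k k] Gp_ge_Gh[OF r bk]
        by simp
    qed
  qed
  have "measure noise {us \<in> space noise. M_N N (chain_path (up_p p) us) > x} = measure (stream_space UU) E1"
    by (subst ev1) (simp add: noise_def)
  also have "\<dots> \<le> 1 - P.QQ 0 0" by (rule m1)
  also have "\<dots> \<le> 1 - H.QQ 0 0" using cmp by simp
  also have "\<dots> \<le> measure (stream_space UU) E2" using m2 m3 by simp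
  also have "\<dots> = measure noise {us \<in> space noise. M_N N (chain_path up_half us) > x}"
    by (subst ev2) (simp add: noise_def)
  finally show ?thesis .
qed

end
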